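(* For any orderings of $V$ used in the two passes, the output $S$ of the Two-Pass algorithm satisfies $|S|\le k$ and $f(S)\ge\frac59\mathrm{OPT}$.
   Context: $V$ is a finite ground set with $|V|=n$; $f:2^V\to\mathbb{R}_{\ge0}$ is monotone, submodular and normalized; $f(e\mid Y)=f(Y\cup\{e\})-f(Y)$. $k\le n$ is a positive integer and $\mathrm{OPT}=\max\{f(S):S\subseteq V,|S|\le k\}$. Two-Pass algorithm (knows $\mathrm{OPT}$): start with $S=\emptyset$. In the first pass over the elements of $V$ (in some order), add each element $e$ to $S$ if $|S|<k$ and $f(e\mid S)\ge\frac{2}{3}\cdot\frac{\mathrm{OPT}}{k}$. In the second pass over the elements of $V$ (in some order), add each element $e$ to $S$ if $|S|<k$ and $f(e\mid S)\ge\frac{4}{9}\cdot\frac{\mathrm{OPT}}{k}$. Return $S$. *)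

theory Defs
  imports Complex_Main
begin

definition marginal :: "('a set \<Rightarrow> real) \<Rightarrow> 'a \<Rightarrow> 'a set \<Rightarrow> real" where
  "marginal f e Y = f (Y \<union> {e}) - f Y"

definition monotone_set_fun :: "'a set \<Rightarrow> ('a set \<Rightarrow> real) \<Rightarrow> bool" where
  "monotone_set_fun V f \<longleftrightarrow> (\<forall>A B. A \<subseteq> B \<and> B \<subseteq> V \<longrightarrow> f A \<le> f B)"

definition submodular :: "'a set \<Rightarrow> ('a set \<Rightarrow> real) \<Rightarrow> bool" where
  "submodular V f \<longleftrightarrow>
     (\<forall>A B e. A \<subseteq> B \<and> B \<subseteq> V \<and> e \<in> V - B \<longrightarrow> marginal f e B \<le> marginal f e A)"

definition normalized :: "('a set \<Rightarrow> real) \<Rightarrow> bool" where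
  "normalized f \<longleftrightarrow> f {} = 0"

definition nonneg_set_fun :: "'a set \<Rightarrow> ('a set \<Rightarrow> real) \<Rightarrow> bool" where
  "nonneg_set_fun V f \<longleftrightarrow> (\<forall>S. S \<subseteq> V \<longrightarrow> f S \<ge> 0)"

definition OPT :: "'a set \<Rightarrow> ('a set \<Rightarrow> real) \<Rightarrow> nat \<Rightarrow> real" where
  "OPT V f k = Max {f S | S. S \<subseteq> V \<and> card S \<le> k}"

definition threshold_pass :: "('a set \<Rightarrow> real) \<Rightarrow> nat \<Rightarrow> real \<Rightarrow> 'a list \<Rightarrow> 'a set \<Rightarrow> 'a set" where
  "threshold_pass f k \<tau> xs S0 =
     fold (\<lambda>e S. if card S < k \<and> marginal f e S \<ge> \<tau> then insert e S else S) xs S0"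

definition two_pass :: "('a set \<Rightarrow> real) \<Rightarrow> nat \<Rightarrow> real \<Rightarrow> 'a list \<Rightarrow> 'a list \<Rightarrow> 'a set" where
  "two_pass f k opt ord1 ord2 =
     threshold_pass f k ((4/9) * (opt / real k)) ord2
       (threshold_pass f k ((2/3) * (opt / real k)) ord1 {})"

end

theory Submission
  imports Defs
begin

lemma pass_props:
  assumes fin: "finite V" and sub: "submodular V f"
  shows "S0 \<subseteq> V \<Longrightarrow> set xs \<subseteq> V \<Longrightarrow> card S0 \<le> k \<Longrightarrow>
    S0 \<subseteq> threshold_pass f k \<tau> xs S0 \<and> threshold_pass f k \<tau> xs S0 \<subseteq> V
    \<and> card (threshold_pass f k \<tau> xs S0) \<le> k
    \<and> f (threshold_pass f k \<tau> xs S0) \<ge> f S0 + (real (card (threshold_pass f k \<tau> xs S0)) - real (card S0)) * \<tau>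
    \<and> (\<forall>e\<in>set xs. e \<in> threshold_pass f k \<tau> xs S0 \<or> card (threshold_pass f k \<tau> xs S0) = k
          \<or> (\<exists>T. T \<subseteq> threshold_pass f k \<tau> xs S0 \<and> marginal f e T < \<tau>))"
proof (induction xs arbitrary: S0)
  case Nil
  then show ?case by (simp add: threshold_pass_def)
next
  case (Cons x xs)
  define S1 where "S1 = (if card S0 < k \<and> marginal f x S0 \<ge> \<tau> then insert x S0 else S0)"
  have eq: "threshold_pass f k \<tau> (x#xs) S0 = threshold_pass f k \<tau> xs S1"
    by (simp add: threshold_pass_def S1_def)
  define S where "S = threshold_pass f k \<tau> xs S1"
  have S1V: "S1 \<subseteq> V" using Cons.prems by (auto simp: S1_def)
  have finS0: "finite S0" using Cons.prems fin finite_subset by blast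
  have cS1: "card S1 \<le> k" using Cons.prems finS0 by (auto simp: S1_def card_insert_if)
  have fS1: "f S1 \<ge> f S0 + (real (card S1) - real (card S0)) * \<tau>"
  proof (cases "card S0 < k \<and> marginal f x S0 \<ge> \<tau>")
    case True
    show ?thesis
    proof (cases "x \<in> S0")
      case True2: True
      then show ?thesis using True by (simp add: S1_def insert_absorb)
    next
      case False
      then show ?thesis using True finS0
        by (simp add: S1_def marginal_def)
    qed
  next
    case False
    then have "S1 = S0" unfolding S1_def by (simp only: if_False)
    then show ?thesis by simp
  qed
  have IH: "S1 \<subseteq> S \<and> S \<subseteq> V \<and> card S \<le> k \<and> f S \<ge> f S1 + (real (card S) - real (card S1)) * \<tau>
    \<and> (\<forall>e\<in>set xs. e \<in> S \<or> card S = k \<or> (\<exists>T. T \<subseteq> S \<and> marginal f e T < \<tau>))"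
    using Cons.IH[OF S1V _ cS1] Cons.prems unfolding S_def by auto
  have S0S1: "S0 \<subseteq> S1" by (auto simp: S1_def)
  have finS: "finite S" using IH fin finite_subset by blast
  have mono: "card S1 \<le> card S" using IH finS card_mono by blast
  have xcase: "x \<in> S \<or> card S = k \<or> (\<exists>T. T \<subseteq> S \<and> marginal f x T < \<tau>)"
  proof (cases "card S0 < k \<and> marginal f x S0 \<ge> \<tau>")
    case True
    then have "x \<in> S1" by (simp add: S1_def)
    then show ?thesis using IH by blast
  next
    case False
    then consider "card S0 \<ge> k" | "marginal f x S0 < \<tau>" by linarith
    then show ?thesis
    proof cases
      case 1
      have "card S0 \<le> card S" using S0S1 IH finS card_mono by (meson order_trans)
      then show ?thesis using 1 IH by linarith
    next
      case 2
      then show ?thesis using S0S1 IH by blast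
    qed
  qed
  have splitc: "(real (card S) - real (card S0)) * \<tau> = (real (card S) - real (card S1)) * \<tau> + (real (card S1) - real (card S0)) * \<tau>"
    by (simp add: algebra_simps)
  have fS: "f S \<ge> f S0 + (real (card S) - real (card S0)) * \<tau>"
    using IH fS1 splitc by linarith
  show ?case unfolding eq S_def[symmetric]
    using IH S0S1 fS xcase by auto
qed

lemma sub_bound:
  assumes fin: "finite V" and sub: "submodular V f"
  shows "finite A \<Longrightarrow> A \<subseteq> V \<Longrightarrow> S \<subseteq> V \<Longrightarrow> A \<inter> S = {} \<Longrightarrow>
     f (S \<union> A) \<le> f S + (\<Sum>e\<in>A. marginal f e S)"
proof (induction A rule: finite_induct)
  case empty
  then show ?case by simp
next
  case (insert a A)
  have c1: "S \<subseteq> S \<union> A" by blast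
  have c2: "S \<union> A \<subseteq> V" using insert.prems by blast
  have c3: "a \<in> V - (S \<union> A)" using insert.prems insert.hyps by blast
  have "marginal f a (S \<union> A) \<le> marginal f a S"
    using sub c1 c2 c3 unfolding submodular_def by blast
  moreover have "f (S \<union> insert a A) = f (S \<union> A) + marginal f a (S \<union> A)"
    by (simp add: marginal_def)
  moreover have "f (S \<union> A) \<le> f S + (\<Sum>e\<in>A. marginal f e S)"
    using insert.IH insert.prems by blast
  ultimately show ?case using insert.hyps by simp
qed

lemma opt_bound:
  assumes fin: "finite V" and sub: "submodular V f" and mon: "monotone_set_fun V f"
    and SV: "S \<subseteq> V" and OV: "Ob \<subseteq> V" and cO: "card Ob \<le> k" and tau: "\<tau> \<ge> 0"
    and m: "\<forall>e\<in>Ob - S. marginal f e S < \<tau>"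
  shows "f Ob \<le> f S + real k * \<tau>"
proof -
  have finO: "finite (Ob - S)" using OV fin finite_subset by blast
  have "f Ob \<le> f (S \<union> (Ob - S))"
    using mon SV OV unfolding monotone_set_fun_def by auto
  also have "\<dots> \<le> f S + (\<Sum>e\<in>Ob - S. marginal f e S)"
    by (rule sub_bound[OF fin sub finO]) (use OV SV in auto)
  also have "(\<Sum>e\<in>Ob - S. marginal f e S) \<le> (\<Sum>e\<in>Ob - S. \<tau>)"
    using m by (intro sum_mono) (auto intro: less_imp_le)
  also have "(\<Sum>e\<in>Ob - S. \<tau>) = real (card (Ob - S)) * \<tau>" by simp
  also have "\<dots> \<le> real k * \<tau>"
  proof -
    have "card (Ob - S) \<le> card Ob" using finO OV fin
      by (meson Diff_subset card_mono finite_subset)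
    then show ?thesis using cO tau by (intro mult_right_mono) auto
  qed
  finally show ?thesis by simp
qed

lemma arith_fin:
  fixes a b k s c :: real
  assumes A: "a \<ge> b + (k - s)*((4/9)*c)" and B: "b \<ge> s*((2/3)*c)" and C: "b \<ge> k*c/3"
  shows "a \<ge> (5/9)*(k*c)"
proof -
  define p where "p = s*c"
  define q where "q = k*c"
  have A': "a \<ge> b + (4/9)*q - (4/9)*p" proof -
    have "(k - s)*((4/9)*c) = (4/9)*q - (4/9)*p" unfolding p_def q_def by (simp only: left_diff_distrib right_diff_distrib mult_ac)
    then show ?thesis using A by linarith
  qed
  have B': "b \<ge> (2/3)*p" using B unfolding p_def by (simp add: algebra_simps)
  have C': "b \<ge> q/3" using C unfolding q_def by simp
  show ?thesis unfolding q_def[symmetric] using A' B' C' by linarith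
qed

theorem mainTheorem16:
  fixes V :: "'a set" and f :: "'a set \<Rightarrow> real" and k :: nat
    and ord1 ord2 :: "'a list"
  assumes "finite V"
    and "nonneg_set_fun V f" and "monotone_set_fun V f" and "submodular V f" and "normalized f"
    and "0 < k" and "k \<le> card V"
    and "distinct ord1" and "set ord1 = V"
    and "distinct ord2" and "set ord2 = V"
  shows "card (two_pass f k (OPT V f k) ord1 ord2) \<le> k
       \<and> f (two_pass f k (OPT V f k) ord1 ord2) \<ge> (5/9) * OPT V f k"
proof -
  note fin = assms(1) and sub = assms(4) and mon = assms(3)
  define opt where "opt = OPT V f k"
  define c where "c = opt / real k"
  have kpos: "real k > 0" using assms(6) by simp
  have optc: "opt = real k * c" using kpos by (simp add: c_def)
  let ?M = "{f S | S. S \<subseteq> V \<and> card S \<le> k}"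
  have Meq: "?M = f ` {S. S \<subseteq> V \<and> card S \<le> k}" by auto
  have "finite ?M" unfolding Meq using fin by (intro finite_imageI) (auto intro: finite_subset[of _ "Pow V"])
  moreover have "?M \<noteq> {}" by auto
  ultimately have "opt \<in> ?M" unfolding opt_def OPT_def by (rule Max_in)
  then obtain Ob where OV: "Ob \<subseteq> V" and cO: "card Ob \<le> k" and fO: "f Ob = opt" by auto
  have "opt \<ge> 0" using fO assms(2) OV unfolding nonneg_set_fun_def by auto
  then have c0: "c \<ge> 0" using kpos by (simp add: c_def)
  define S1 where "S1 = threshold_pass f k ((2/3) * c) ord1 {}"
  define S2 where "S2 = threshold_pass f k ((4/9) * c) ord2 S1"
  have tp: "two_pass f k (OPT V f k) ord1 ord2 = S2"
    unfolding two_pass_def S2_def S1_def c_def opt_def by simp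
  have P1: "S1 \<subseteq> V \<and> card S1 \<le> k \<and> f S1 \<ge> f {} + (real (card S1) - 0) * ((2/3) * c)
    \<and> (\<forall>e\<in>V. e \<in> S1 \<or> card S1 = k \<or> (\<exists>T. T \<subseteq> S1 \<and> marginal f e T < (2/3) * c))"
    using pass_props[OF fin sub, of "{}" ord1 k "(2/3) * c"] assms(9) unfolding S1_def by simp
  have P2: "S1 \<subseteq> S2 \<and> S2 \<subseteq> V \<and> card S2 \<le> k \<and> f S2 \<ge> f S1 + (real (card S2) - real (card S1)) * ((4/9) * c)
    \<and> (\<forall>e\<in>V. e \<in> S2 \<or> card S2 = k \<or> (\<exists>T. T \<subseteq> S2 \<and> marginal f e T < (4/9) * c))"
    using pass_props[OF fin sub, of S1 ord2 k "(4/9) * c"] assms(11) P1 unfolding S2_def by simp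
  have f0: "f {} = 0" using assms(5) by (simp add: normalized_def)
  have margS: "marginal f e S < \<tau>" if "e \<in> V" "e \<notin> S" "S \<subseteq> V" "T \<subseteq> S" "marginal f e T < \<tau>" for e S T \<tau>
  proof -
    have "marginal f e S \<le> marginal f e T" using sub that unfolding submodular_def by blast
    then show ?thesis using that by linarith
  qed
  have main: "f S2 \<ge> (5/9) * opt"
  proof (cases "card S2 = k")
    case False
    have mm: "\<forall>e\<in>Ob - S2. marginal f e S2 < (4/9) * c"
      proof
      fix e assume e: "e \<in> Ob - S2"
      then have eV: "e \<in> V" using OV by blast
      then have "e \<in> S2 \<or> card S2 = k \<or> (\<exists>T. T \<subseteq> S2 \<and> marginal f e T < (4/9) * c)"
        using P2 by blast
      then obtain T where T: "T \<subseteq> S2" "marginal f e T < (4/9) * c" using e False by blast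
      have en: "e \<notin> S2" using e by blast
      have SV: "S2 \<subseteq> V" using P2 by blast
      show "marginal f e S2 < (4/9) * c" by (rule margS[OF eV en SV T(1) T(2)])
    qed
    have tt: "0 \<le> (4/9) * c" using c0 by simp
    have "f Ob \<le> f S2 + real k * ((4/9) * c)"
      using opt_bound[OF fin sub mon _ OV cO tt mm] P2 by blast
    then show ?thesis using fO optc by (simp add: algebra_simps)
  next
    case True
    have A: "f S2 \<ge> f S1 + (real k - real (card S1)) * ((4/9) * c)" using P2 True by simp
    have B: "f S1 \<ge> real (card S1) * ((2/3) * c)" using P1 f0 by simp
    have C: "f S1 \<ge> real k * c / 3"
    proof (cases "card S1 = k")
      case True
      have "0 \<le> c * real k" using c0 by simp
      then show ?thesis using B True by (simp add: algebra_simps)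
    next
      case False
      have mm: "\<forall>e\<in>Ob - S1. marginal f e S1 < (2/3) * c"
        proof
      fix e assume e: "e \<in> Ob - S1"
      then have eV: "e \<in> V" using OV by blast
      then have "e \<in> S1 \<or> card S1 = k \<or> (\<exists>T. T \<subseteq> S1 \<and> marginal f e T < (2/3) * c)"
        using P1 by blast
      then obtain T where T: "T \<subseteq> S1" "marginal f e T < (2/3) * c" using e False by blast
      have en: "e \<notin> S1" using e by blast
      have SV: "S1 \<subseteq> V" using P1 by blast
      show "marginal f e S1 < (2/3) * c" by (rule margS[OF eV en SV T(1) T(2)])
    qed
    have tt: "0 \<le> (2/3) * c" using c0 by simp
      have "f Ob \<le> f S1 + real k * ((2/3) * c)"
        using opt_bound[OF fin sub mon _ OV cO tt mm] P1 by blast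
      then show ?thesis using fO optc by (simp add: algebra_simps)
    qed
    have "f S2 \<ge> (5/9) * (real k * c)" by (rule arith_fin[OF A B C])
    then show ?thesis using optc by simp
  qed
  show ?thesis using tp P2 main opt_def by simp
qed

end
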